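(* Let $A$ be a cyclic Leibniz algebra generated by $a$. Then $A$ has a unique Cartan subalgebra, namely the Fitting null component $A_0=\{b\in A: L_a^m(b)=0 \text{ for some } m\ge1\}$ of $L_a$ acting on $A$.
   Context: A (left) Leibniz algebra is an algebra satisfying $x(yz)=(xy)z+y(xz)$ for all $x,y,z$; all algebras are finite-dimensional over a field. $A$ is cyclic generated by $a$ if $A$ is generated as an algebra by the single element $a$. $L_a:A\to A$ is left multiplication $b\mapsto ab$. The normalizer of a subalgebra $C$ is $N_A(C)=\{x\in A: xC\subseteq C,\ Cx\subseteq C\}$. A Cartan subalgebra is a nilpotent subalgebra $C$ with $N_A(C)=C$, where nilpotent means $C^t=0$ for some $t$ ($C^1=C$, $C^{j+1}=CC^j$). *)

theory Defs
  imports "HOL.Vector_Spaces"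
begin

definition leibniz_algebra ::
  "('k::field \<Rightarrow> 'v::ab_group_add \<Rightarrow> 'v) \<Rightarrow> ('v \<Rightarrow> 'v \<Rightarrow> 'v) \<Rightarrow> bool" where
  "leibniz_algebra scale mult \<longleftrightarrow>
     vector_space scale \<and>
     (\<exists>B. finite B \<and> module.span scale B = UNIV) \<and>
     (\<forall>x y z. mult (x + y) z = mult x z + mult y z) \<and>
     (\<forall>x y z. mult x (y + z) = mult x y + mult x z) \<and>
     (\<forall>c x y. mult (scale c x) y = scale c (mult x y)) \<and>
     (\<forall>c x y. mult x (scale c y) = scale c (mult x y)) \<and>
     (\<forall>x y z. mult x (mult y z) = mult (mult x y) z + mult y (mult x z))"

definition subalgebra ::
  "('k::field \<Rightarrow> 'v::ab_group_add \<Rightarrow> 'v) \<Rightarrow> ('v \<Rightarrow> 'v \<Rightarrow> 'v) \<Rightarrow> 'v set \<Rightarrow> bool" where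
  "subalgebra scale mult C \<longleftrightarrow>
     module.subspace scale C \<and> (\<forall>x\<in>C. \<forall>y\<in>C. mult x y \<in> C)"

definition generated_subalgebra ::
  "('k::field \<Rightarrow> 'v::ab_group_add \<Rightarrow> 'v) \<Rightarrow> ('v \<Rightarrow> 'v \<Rightarrow> 'v) \<Rightarrow> 'v \<Rightarrow> 'v set" where
  "generated_subalgebra scale mult a = \<Inter>{C. subalgebra scale mult C \<and> a \<in> C}"

definition cyclic_generated_by ::
  "('k::field \<Rightarrow> 'v::ab_group_add \<Rightarrow> 'v) \<Rightarrow> ('v \<Rightarrow> 'v \<Rightarrow> 'v) \<Rightarrow> 'v \<Rightarrow> bool" where
  "cyclic_generated_by scale mult a \<longleftrightarrow> generated_subalgebra scale mult a = UNIV"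

definition subspace_prod ::
  "('k::field \<Rightarrow> 'v::ab_group_add \<Rightarrow> 'v) \<Rightarrow> ('v \<Rightarrow> 'v \<Rightarrow> 'v) \<Rightarrow> 'v set \<Rightarrow> 'v set \<Rightarrow> 'v set" where
  "subspace_prod scale mult C D = module.span scale {mult x y | x y. x \<in> C \<and> y \<in> D}"

text \<open>lower_power scale mult C j is C^(j+1) in the paper: C^1 = C, C^(j+1) = C C^j.\<close>
fun lower_power ::
  "('k::field \<Rightarrow> 'v::ab_group_add \<Rightarrow> 'v) \<Rightarrow> ('v \<Rightarrow> 'v \<Rightarrow> 'v) \<Rightarrow> 'v set \<Rightarrow> nat \<Rightarrow> 'v set" where
  "lower_power scale mult C 0 = C"
| "lower_power scale mult C (Suc j) = subspace_prod scale mult C (lower_power scale mult C j)"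

definition nilpotent_subalgebra ::
  "('k::field \<Rightarrow> 'v::ab_group_add \<Rightarrow> 'v) \<Rightarrow> ('v \<Rightarrow> 'v \<Rightarrow> 'v) \<Rightarrow> 'v set \<Rightarrow> bool" where
  "nilpotent_subalgebra scale mult C \<longleftrightarrow>
     subalgebra scale mult C \<and> (\<exists>t. lower_power scale mult C t = {0})"

definition normalizer :: "('v \<Rightarrow> 'v \<Rightarrow> 'v) \<Rightarrow> 'v set \<Rightarrow> 'v set" where
  "normalizer mult C = {x. (\<forall>c\<in>C. mult x c \<in> C) \<and> (\<forall>c\<in>C. mult c x \<in> C)}"

definition cartan_subalgebra ::
  "('k::field \<Rightarrow> 'v::ab_group_add \<Rightarrow> 'v) \<Rightarrow> ('v \<Rightarrow> 'v \<Rightarrow> 'v) \<Rightarrow> 'v set \<Rightarrow> bool" where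
  "cartan_subalgebra scale mult C \<longleftrightarrow>
     nilpotent_subalgebra scale mult C \<and> normalizer mult C = C"

definition fitting_null :: "('v::zero \<Rightarrow> 'v \<Rightarrow> 'v) \<Rightarrow> 'v \<Rightarrow> 'v set" where
  "fitting_null mult a = {b. \<exists>m\<ge>1. (mult a ^^ m) b = 0}"

end

theory Submission
  imports Defs
begin

lemma (in vector_space) chain_up:
  assumes "finite B0" "span B0 = UNIV" "\<And>k. subspace (f k)" "\<And>k. f k \<subseteq> f (Suc k)"
  shows "\<exists>k. f (Suc k) = f k"
proof -
  obtain B where B: "independent B" "UNIV \<subseteq> span B"
    using basis_exists[of UNIV] by metis
  have "finite B" using independent_span_bound[OF assms(1) B(1)] assms(2) by auto
  then interpret fd: finite_dimensional_vector_space scale B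
    by unfold_locales (use B in auto)
  show ?thesis
  proof (rule ccontr)
    assume "\<not> ?thesis"
    then have ps: "\<And>k. f k \<subset> f (Suc k)" using assms(4) by blast
    have "\<And>k. k \<le> dim (f k)"
    proof -
      fix k show "k \<le> dim (f k)"
      proof (induction k)
        case (Suc k)
        have "dim (f k) < dim (f (Suc k))"
          using fd.dim_psubset[of "f k" "f (Suc k)"] ps[of k] assms(3) span_eq_iff by metis
        then show ?case using Suc by simp
      qed simp
    qed
    moreover have "dim (f (Suc fd.dimension)) \<le> fd.dimension" by (rule fd.dim_subset_UNIV)
    ultimately show False by (metis Suc_n_not_le_n order_trans)
  qed
qed

lemma (in vector_space) chain_down:
  assumes "finite B0" "span B0 = UNIV" "\<And>k. subspace (f k)" "\<And>k. f (Suc k) \<subseteq> f k"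
  shows "\<exists>k. f (Suc k) = f k"
proof -
  obtain B where B: "independent B" "UNIV \<subseteq> span B"
    using basis_exists[of UNIV] by metis
  have "finite B" using independent_span_bound[OF assms(1) B(1)] assms(2) by auto
  then interpret fd: finite_dimensional_vector_space scale B
    by unfold_locales (use B in auto)
  show ?thesis
  proof (rule ccontr)
    assume "\<not> ?thesis"
    then have ps: "\<And>k. f (Suc k) \<subset> f k" using assms(4) by blast
    have "\<And>k. dim (f k) + k \<le> dim (f 0)"
    proof -
      fix k show "dim (f k) + k \<le> dim (f 0)"
      proof (induction k)
        case (Suc k)
        have "dim (f (Suc k)) < dim (f k)"
          using fd.dim_psubset[of "f (Suc k)" "f k"] ps[of k] assms(3) span_eq_iff by metis
        then show ?case using Suc by simp
      qed simp
    qed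
    from this[of "Suc (dim (f 0))"] show False by simp
  qed
qed


locale LA = vector_space scale for scale :: "'k::field \<Rightarrow> 'v::ab_group_add \<Rightarrow> 'v" +
  fixes mult :: "'v \<Rightarrow> 'v \<Rightarrow> 'v" and a :: 'v
  assumes fin: "\<exists>B. finite B \<and> span B = UNIV"
    and addL: "\<And>x y z. mult (x + y) z = mult x z + mult y z"
    and addR: "\<And>x y z. mult x (y + z) = mult x y + mult x z"
    and scL: "\<And>c x y. mult (scale c x) y = scale c (mult x y)"
    and scR: "\<And>c x y. mult x (scale c y) = scale c (mult x y)"
    and leib: "\<And>x y z. mult x (mult y z) = mult (mult x y) z + mult y (mult x z)"
    and cyc: "generated_subalgebra scale mult a = UNIV"
begin

lemma m0L[simp]: "mult 0 z = 0"
  using addL[of 0 0 z] by simp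
lemma m0R[simp]: "mult z 0 = 0"
  using addR[of z 0 0] by simp
lemma prodL: "mult (mult x y) z = mult x (mult y z) - mult y (mult x z)"
  using leib[of x y z] by (simp add: algebra_simps)

lemma decomp: "\<exists>c. \<forall>z. mult x z = scale c (mult a z)"
proof -
  define W where "W = {w. \<forall>z. mult w z = 0}"
  define S where "S = {y. \<exists>c w. y = scale c a + w \<and> w \<in> W}"
  have Wadd: "w1 + w2 \<in> W" if "w1 \<in> W" "w2 \<in> W" for w1 w2
    using that by (simp add: W_def addL)
  have Wsc: "scale c w \<in> W" if "w \<in> W" for c w
    using that by (simp add: W_def scL)
  have aW: "mult a w \<in> W" if "w \<in> W" for w
    using that by (simp add: W_def prodL)
  have aa: "mult a a \<in> W" by (simp add: W_def prodL)
  have aS: "mult a y \<in> W" if "y \<in> S" for y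
  proof -
    from that obtain c w where y: "y = scale c a + w" "w \<in> W" by (auto simp: S_def)
    have "mult a y = scale c (mult a a) + mult a w" by (simp add: y addR scR)
    then show ?thesis using Wadd Wsc aW aa y by simp
  qed
  have WS: "w \<in> S" if "w \<in> W" for w
  proof -
    have "w = scale 0 a + w" by simp
    then show ?thesis using that unfolding S_def by blast
  qed
  have sub: "subspace S"
    unfolding subspace_def
  proof (intro conjI ballI allI)
    show "0 \<in> S" using WS by (simp add: W_def)
  next
    fix x y assume "x \<in> S" "y \<in> S"
    then obtain c1 w1 c2 w2 where "x = scale c1 a + w1" "w1 \<in> W" "y = scale c2 a + w2" "w2 \<in> W"
      by (auto simp: S_def)
    then have "x + y = scale (c1+c2) a + (w1+w2)" "w1+w2 \<in> W"
      by (auto simp: Wadd scale_left_distrib algebra_simps)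
    then show "x + y \<in> S" unfolding S_def by blast
  next
    fix c x assume "x \<in> S"
    then obtain c1 w1 where "x = scale c1 a + w1" "w1 \<in> W" by (auto simp: S_def)
    then have "scale c x = scale (c*c1) a + scale c w1" "scale c w1 \<in> W"
      by (auto simp: Wsc scale_right_distrib)
    then show "scale c x \<in> S" unfolding S_def by blast
  qed
  have closed: "mult x y \<in> S" if "x \<in> S" "y \<in> S" for x y
  proof -
    from that obtain c w where x: "x = scale c a + w" "w \<in> W" by (auto simp: S_def)
    have "mult x y = scale c (mult a y)" using x by (simp add: addL scL W_def)
    then show ?thesis using aS[OF that(2)] Wsc WS by simp
  qed
  have "a = scale 1 a + 0" "(0::'v) \<in> W" by (auto simp: W_def)
  then have "a \<in> S" unfolding S_def by blast
  then have "subalgebra scale mult S" "a \<in> S" using sub closed by (auto simp: subalgebra_def)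
  then have "UNIV \<subseteq> S" using cyc unfolding generated_subalgebra_def by blast
  then have "x \<in> S" by blast
  then obtain c w where "x = scale c a + w" "w \<in> W" unfolding S_def by blast
  then show ?thesis by (rule_tac x=c in exI) (simp add: addL scL W_def)
qed

lemma Lzero[simp]: "mult (mult a w) z = 0"
proof -
  obtain c where c: "\<forall>z. mult w z = scale c (mult a z)" using decomp by blast
  show ?thesis by (simp add: prodL c scR)
qed


abbreviation P where "P k \<equiv> mult a ^^ k"

lemma P_add: "P k (x + y) = P k x + P k y"
  by (induction k) (auto simp: addR)
lemma P_scale: "P k (scale c x) = scale c (P k x)"
  by (induction k) (auto simp: scR)
lemma P_zero[simp]: "P k 0 = 0"
  by (induction k) auto
lemma P_diff: "P k (x - y) = P k x - P k y"
  using P_add[of k "x - y" y] by (simp add: algebra_simps)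
lemma P_comm: "P k (mult a x) = mult a (P k x)"
  by (induction k) auto
lemma P_SucR: "P (Suc k) x = P k (mult a x)"
  by (simp add: P_comm)
lemma P_plus: "P (m + n) x = P m (P n x)"
  by (simp add: funpow_add)

lemma ker_sub: "subspace {x. P k x = 0}"
  unfolding subspace_def by (auto simp: P_add P_scale)
lemma img_sub: "subspace (range (P k))"
  unfolding subspace_def
proof (intro conjI ballI allI)
  have "P k 0 = 0" by simp
  then show "0 \<in> range (P k)" by (metis rangeI)
next
  fix x y assume "x \<in> range (P k)" "y \<in> range (P k)"
  then obtain x' y' where "x = P k x'" "y = P k y'" by blast
  then have "x + y = P k (x' + y')" by (simp add: P_add)
  then show "x + y \<in> range (P k)" by blast
next
  fix c x assume "x \<in> range (P k)"
  then obtain x' where "x = P k x'" by blast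
  then have "scale c x = P k (scale c x')" by (simp add: P_scale)
  then show "scale c x \<in> range (P k)" by blast
qed

abbreviation FN where "FN \<equiv> fitting_null mult a"

lemma FN_L: "y \<in> FN \<Longrightarrow> mult a y \<in> FN"
  unfolding fitting_null_def by (auto simp: P_comm)
lemma FN_mult: "y \<in> FN \<Longrightarrow> mult x y \<in> FN"
proof -
  assume y: "y \<in> FN"
  obtain c where c: "\<forall>z. mult x z = scale c (mult a z)" using decomp by blast
  from FN_L[OF y] obtain m where "m \<ge> 1" "P m (mult a y) = 0" unfolding fitting_null_def by blast
  then show ?thesis using c unfolding fitting_null_def by (auto simp: P_scale)
qed
lemma FN_sub: "subspace FN"
  unfolding subspace_def
proof (intro conjI ballI allI)
  show "0 \<in> FN" unfolding fitting_null_def by auto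
next
  fix x y assume "x \<in> FN" "y \<in> FN"
  then obtain m n where "m \<ge> 1" "P m x = 0" "n \<ge> 1" "P n y = 0" unfolding fitting_null_def by blast
  then have "P (n + m) x = 0" "P (m + n) y = 0" by (auto simp: P_plus)
  then have "P (m + n) (x + y) = 0" by (simp add: P_add add.commute)
  then show "x + y \<in> FN" unfolding fitting_null_def using \<open>m \<ge> 1\<close> by (intro CollectI exI[of _ "m+n"]) auto
next
  fix c x assume "x \<in> FN"
  then show "scale c x \<in> FN" unfolding fitting_null_def by (auto simp: P_scale)
qed

lemma bound: "\<exists>N\<ge>1. \<forall>y\<in>FN. P N y = 0"
proof -
  obtain B0 where B0: "finite B0" "span B0 = UNIV" using fin by blast
  have "\<And>k. {x. P k x = 0} \<subseteq> {x. P (Suc k) x = 0}" by auto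
  from chain_up[OF B0, where f="\<lambda>k. {x. P k x = 0}", OF ker_sub this]
  obtain k0 where k0: "{x. P (Suc k0) x = 0} = {x. P k0 x = 0}" by blast
  have claim: "P k0 y = 0" if "P (k0 + j) y = 0" for j y
    using that
  proof (induction j arbitrary: y)
    case (Suc j)
    have "P (k0 + j) (mult a y) = 0" using Suc.prems by (simp add: P_SucR[symmetric])
    then have "P k0 (mult a y) = 0" by (rule Suc.IH)
    then have "y \<in> {x. P (Suc k0) x = 0}" by (simp add: P_comm)
    then show ?case using k0 by auto
  qed simp
  show ?thesis
  proof (intro exI[of _ "Suc k0"] conjI ballI)
    fix y assume "y \<in> FN"
    then obtain m where "P m y = 0" unfolding fitting_null_def by blast
    then have "P (k0 + m) y = 0" by (simp add: P_plus)
    then have "P k0 y = 0" by (rule claim)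
    then show "P (Suc k0) y = 0" by simp
  qed simp
qed

lemma FN_nil: "\<exists>t. lower_power scale mult FN t = {0}"
proof -
  obtain N where N: "N \<ge> 1" "\<forall>y\<in>FN. P N y = 0" using bound by blast
  have incl: "lower_power scale mult FN j \<subseteq> {v. P (N - j) v = 0}" for j
  proof (induction j)
    case 0 then show ?case using N by auto
  next
    case (Suc j)
    have "{mult x y | x y. x \<in> FN \<and> y \<in> lower_power scale mult FN j} \<subseteq> {v. P (N - Suc j) v = 0}"
    proof clarify
      fix x y assume "x \<in> FN" "y \<in> lower_power scale mult FN j"
      then have y: "P (N - j) y = 0" using Suc by auto
      obtain c where c: "\<forall>z. mult x z = scale c (mult a z)" using decomp by blast
      show "P (N - Suc j) (mult x y) = 0"
      proof (cases "N - j")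
        case 0 then show ?thesis using y by simp
      next
        case (Suc n)
        then have "n = N - Suc j" by simp
        then show ?thesis using y Suc c by (simp add: P_scale P_comm)
      qed
    qed
    then show ?case
      by (simp add: subspace_prod_def span_minimal ker_sub)
  qed
  have "0 \<in> lower_power scale mult FN N"
    using N(1) by (cases N) (auto simp: subspace_prod_def span_zero)
  then show ?thesis using incl[of N] by (intro exI[of _ N]) auto
qed

lemma u_exists: "\<exists>u\<in>FN. \<forall>z. mult u z = mult a z"
proof -
  obtain B0 where B0: "finite B0" "span B0 = UNIV" using fin by blast
  have dec: "range (P (Suc k)) \<subseteq> range (P k)" for k
  proof
    fix x assume "x \<in> range (P (Suc k))"
    then obtain y where "x = P (Suc k) y" by blast
    then have "x = P k (mult a y)" by (simp only: P_SucR)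
    then show "x \<in> range (P k)" by blast
  qed
  from chain_down[OF B0, where f="\<lambda>k. range (P k)", OF img_sub dec]
  obtain k1 where k1: "range (P (Suc k1)) = range (P k1)" by blast
  have img_Suc: "range (P (Suc n)) = mult a ` range (P n)" for n
    by (simp only: funpow.simps image_comp)
  have stS: "range (P (Suc (k1 + j))) = range (P (k1 + j))" for j
  proof (induction j)
    case 0 show ?case using k1 by (simp only: add_0_right)
  next
    case (Suc j)
    have "range (P (Suc (Suc (k1+j)))) = mult a ` range (P (Suc (k1+j)))" by (rule img_Suc)
    also have "\<dots> = mult a ` range (P (k1+j))" using Suc.IH by (simp only:)
    also have "\<dots> = range (P (Suc (k1+j)))" by (rule img_Suc[symmetric])
    finally show ?case by simp
  qed
  have st: "range (P (k1 + j)) = range (P k1)" for j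
  proof (induction j)
    case (Suc j) then show ?case using stS[of j] by (metis add_Suc_right)
  qed simp
  define n where "n = Suc k1"
  have e1: "range (P n) = range (P k1)" using st[of 1] by (simp only: n_def Suc_eq_plus1)
  have nn: "n + n = k1 + Suc (Suc k1)" by (simp add: n_def)
  have e2: "range (P (n + n)) = range (P k1)" using st[of "Suc (Suc k1)"] by (simp only: nn)
  have "P n a \<in> range (P (n + n))" using e1 e2 by blast
  then obtain v where v: "P n a = P (n + n) v" by blast
  define u where "u = a - P n v"
  have "P n u = 0" unfolding u_def using v by (simp only: P_diff P_plus) simp
  moreover have "n \<ge> 1" by (simp add: n_def)
  ultimately have "u \<in> FN" unfolding fitting_null_def by blast
  moreover have "mult u z = mult a z" for z
  proof -
    have "P n v = mult a (P k1 v)" by (simp add: n_def)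
    then have "mult (P n v) z = 0" by simp
    moreover have "mult u z = mult a z - mult (P n v) z"
      unfolding u_def using addL[of "a - P n v" "P n v" z] by (simp add: algebra_simps)
    ultimately show ?thesis by simp
  qed
  ultimately show ?thesis by blast
qed

lemma FN_cartan: "cartan_subalgebra scale mult FN"
proof -
  have cl: "\<forall>x\<in>FN. \<forall>y\<in>FN. mult x y \<in> FN" using FN_mult by blast
  have sa: "subalgebra scale mult FN"
    unfolding subalgebra_def using FN_sub cl by (intro conjI)
  have n1: "FN \<subseteq> normalizer mult FN"
  proof
    fix x assume x: "x \<in> FN"
    have "\<forall>c\<in>FN. mult x c \<in> FN" using FN_mult by blast
    moreover have "\<forall>c\<in>FN. mult c x \<in> FN" using FN_mult x by blast
    ultimately show "x \<in> normalizer mult FN" unfolding normalizer_def by blast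
  qed
  have n2: "normalizer mult FN \<subseteq> FN"
  proof
    fix x assume x: "x \<in> normalizer mult FN"
    obtain u where u: "u \<in> FN" "\<forall>z. mult u z = mult a z" using u_exists by blast
    have "mult u x \<in> FN" using x u(1) unfolding normalizer_def by blast
    then have "mult a x \<in> FN" using u(2) by simp
    then obtain m where "m \<ge> 1" "P m (mult a x) = 0" unfolding fitting_null_def by blast
    then have "P (Suc m) x = 0" by (simp only: P_SucR)
    then show "x \<in> FN" unfolding fitting_null_def by (intro CollectI exI[of _ "Suc m"]) simp
  qed
  show ?thesis unfolding cartan_subalgebra_def nilpotent_subalgebra_def
    using sa FN_nil n1 n2 by blast
qed

lemma uniq:
  assumes C: "cartan_subalgebra scale mult C"
  shows "C = FN"
proof -
  have subC: "subspace C" and clC: "\<And>x y. x \<in> C \<Longrightarrow> y \<in> C \<Longrightarrow> mult x y \<in> C"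
    and nilC: "\<exists>t. lower_power scale mult C t = {0}" and NC: "normalizer mult C = C"
    using C unfolding cartan_subalgebra_def nilpotent_subalgebra_def subalgebra_def by auto
  have inN: "x \<in> C" if "\<And>c. c \<in> C \<Longrightarrow> mult x c \<in> C" "\<And>c. c \<in> C \<Longrightarrow> mult c x \<in> C" for x
  proof -
    have "x \<in> normalizer mult C" unfolding normalizer_def using that by blast
    then show ?thesis using NC by simp
  qed
  show ?thesis
  proof (cases "\<forall>z. mult a z = 0")
    case True
    have all0: "mult x y = 0" for x y
    proof -
      obtain c where "\<forall>z. mult x z = scale c (mult a z)" using decomp by blast
      then have "mult x y = scale c (mult a y)" by blast
      moreover have "mult a y = 0" using True by blast
      ultimately show ?thesis by (simp only: scale_zero_right)
    qed
    have "FN = UNIV" unfolding fitting_null_def using True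
      by (auto intro!: exI[of _ 1])
    moreover have "x \<in> C" for x by (rule inN) (simp_all add: all0 subspace_0[OF subC])
    ultimately show ?thesis by auto
  next
    case False
    then obtain z0 where z0: "mult a z0 \<noteq> 0" by blast
    have "\<exists>x\<in>C. \<forall>z. mult x z = mult a z"
    proof (rule ccontr)
      assume nx: "\<not> ?thesis"
      have zeroC: "mult y z = 0" if "y \<in> C" for y z
      proof -
        obtain c where c: "\<forall>z. mult y z = scale c (mult a z)" using decomp by blast
        show ?thesis
        proof (cases "c = 0")
          case True
          have "mult y z = scale c (mult a z)" using c by blast
          then show ?thesis using True by (simp only: scale_zero_left)
        next
          case False
          have "scale (inverse c) y \<in> C" using subspace_scale[OF subC that] .
          moreover have "\<forall>z. mult (scale (inverse c) y) z = mult a z"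
          proof
            fix z
            have "mult (scale (inverse c) y) z = scale (inverse c) (mult y z)" by (rule scL)
            also have "\<dots> = scale (inverse c) (scale c (mult a z))" using c by metis
            also have "\<dots> = mult a z" using False by (simp only: scale_scale) simp
            finally show "mult (scale (inverse c) y) z = mult a z" .
          qed
          ultimately show ?thesis using nx by blast
        qed
      qed
      have aC: "mult a c \<in> C" if "c \<in> C" for c
        by (rule inN) (use zeroC subspace_0[OF subC] that in simp)+
      have "a \<in> C"
      proof (rule inN)
        fix c assume "c \<in> C" then show "mult a c \<in> C" by (rule aC)
      next
        fix c assume "c \<in> C" then show "mult c a \<in> C" using zeroC subspace_0[OF subC] by simp
      qed
      then show False using zeroC z0 by blast
    qed
    then obtain x where x: "x \<in> C" "\<forall>z. mult x z = mult a z" by blast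
    have CF: "C \<subseteq> FN"
    proof
      fix c assume c: "c \<in> C"
      have pw: "P j c \<in> lower_power scale mult C j" for j
      proof (induction j)
        case 0 then show ?case using c by simp
      next
        case (Suc j)
        have "P (Suc j) c = mult a (P j c)" by simp
        also have "\<dots> = mult x (P j c)" using x(2) by metis
        finally have "P (Suc j) c = mult x (P j c)" .
        then have "P (Suc j) c \<in> {mult x y | x y. x \<in> C \<and> y \<in> lower_power scale mult C j}"
          using Suc x(1) by blast
        then show ?case by (simp add: subspace_prod_def span_base)
      qed
      obtain t where "lower_power scale mult C t = {0}" using nilC by blast
      then have "P t c = 0" using pw[of t] by simp
      then have "P (Suc t) c = 0" by simp
      then show "c \<in> FN" unfolding fitting_null_def by (intro CollectI exI[of _ "Suc t"]) simp
    qed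
    have "FN \<subseteq> C"
    proof
      fix y assume "y \<in> FN"
      then obtain m where m: "P m y = 0" unfolding fitting_null_def by blast
      show "y \<in> C"
      proof (rule ccontr)
        assume yC: "y \<notin> C"
        define k where "k = (LEAST k. P k y \<in> C)"
        have ex: "P m y \<in> C" using m subspace_0[OF subC] by simp
        have kC: "P k y \<in> C" unfolding k_def by (rule LeastI[of _ m]) (rule ex)
        have k0: "k \<noteq> 0" using kC yC by (cases k) auto
        then obtain k' where k': "k = Suc k'" by (cases k) auto
        have y'C: "P k' y \<notin> C"
        proof
          assume "P k' y \<in> C"
          then have "k \<le> k'" unfolding k_def by (rule Least_le)
          then show False using k' by simp
        qed
        have ay': "mult a (P k' y) \<in> C" using kC k' by simp
        have "P k' y \<in> C"
        proof (rule inN)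
          fix d assume d: "d \<in> C"
          obtain c1 where c1: "\<forall>z. mult (P k' y) z = scale c1 (mult a z)" using decomp by blast
          have "mult (P k' y) d = scale c1 (mult a d)" using c1 by blast
          also have "\<dots> = scale c1 (mult x d)" using x(2) by metis
          finally have "mult (P k' y) d = scale c1 (mult x d)" .
          then show "mult (P k' y) d \<in> C" using subspace_scale[OF subC clC[OF x(1) d]] by simp
        next
          fix d assume d: "d \<in> C"
          obtain c2 where c2: "\<forall>z. mult d z = scale c2 (mult a z)" using decomp by blast
          have "mult d (P k' y) = scale c2 (mult a (P k' y))" using c2 by blast
          then show "mult d (P k' y) \<in> C" using subspace_scale[OF subC ay'] by simp
        qed
        then show False using y'C by blast
      qed
    qed
    then show ?thesis using CF by blast
  qed
qed

end

theorem mainTheorem11: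
  fixes scale :: "'k::field \<Rightarrow> 'v::ab_group_add \<Rightarrow> 'v"
    and mult :: "'v \<Rightarrow> 'v \<Rightarrow> 'v"
    and a :: 'v
  assumes "leibniz_algebra scale mult"
    and "cyclic_generated_by scale mult a"
  shows "cartan_subalgebra scale mult (fitting_null mult a) \<and>
         (\<forall>C. cartan_subalgebra scale mult C \<longrightarrow> C = fitting_null mult a)"
proof -
  have L: "vector_space scale \<and>
     (\<exists>B. finite B \<and> module.span scale B = UNIV) \<and>
     (\<forall>x y z. mult (x + y) z = mult x z + mult y z) \<and>
     (\<forall>x y z. mult x (y + z) = mult x y + mult x z) \<and>
     (\<forall>c x y. mult (scale c x) y = scale c (mult x y)) \<and>
     (\<forall>c x y. mult x (scale c y) = scale c (mult x y)) \<and>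
     (\<forall>x y z. mult x (mult y z) = mult (mult x y) z + mult y (mult x z))"
    using assms(1) unfolding leibniz_algebra_def .
  then have vs: "vector_space scale" by (rule conjunct1)
  have cy: "generated_subalgebra scale mult a = UNIV"
    using assms(2) unfolding cyclic_generated_by_def .
  have "LA scale mult a"
  proof (rule LA.intro[OF vs], rule LA_axioms.intro)
    show "\<exists>B. finite B \<and> module.span scale B = UNIV" using L by (elim conjE)
    show "\<And>x y z. mult (x + y) z = mult x z + mult y z" using L by (elim conjE) blast
    show "\<And>x y z. mult x (y + z) = mult x y + mult x z" using L by (elim conjE) blast
    show "\<And>c x y. mult (scale c x) y = scale c (mult x y)" using L by (elim conjE) blast
    show "\<And>c x y. mult x (scale c y) = scale c (mult x y)" using L by (elim conjE) blast
    show "\<And>x y z. mult x (mult y z) = mult (mult x y) z + mult y (mult x z)" using L by (elim conjE) blast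
    show "generated_subalgebra scale mult a = UNIV" by (rule cy)
  qed
  then interpret LA scale mult a .
  show ?thesis using FN_cartan uniq by blast
qed

end
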